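(* Let $T$ be a forest, $A\in\mathcal R(T)$ and $c\ge1$. If $T_1,\dots,T_c$ are mutually independent subtrees of $T$ and $A[T_i]$ is invertible for each $i\in[c]$, then $$\mathrm{nullity}(A)\le P\bigl(T\setminus(T_1\cup\dots\cup T_c)\bigr).$$
   Context: For a forest $T$ with vertices identified with $\{1,\dots,n\}$, $\mathcal R(T)$ is the set of real $n\times n$ matrices $A=(a_{ij})$ with $a_{ij}\ne0$ iff $\{i,j\}\in E(T)$ for $i\neq j$, and $a_{ij}a_{ji}>0$ on every edge; diagonal entries arbitrary. $A[T_i]$ is the principal submatrix indexed by $V(T_i)$. Two subtrees $T_1,T_2$ of $T$ are independent if no edge of $T$ joins a vertex of $T_1$ to a vertex of $T_2$. A path cover of a graph $G$ is a set of vertex-disjoint induced paths whose vertex sets cover $V(G)$; $P(G)$, the path cover number, is the minimum number of paths in a path cover. $T\setminus(T_1\cup\dots\cup T_c)$ is the induced subgraph on the remaining vertices. *)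

theory Defs
  imports "Jordan_Normal_Form.DL_Submatrix" "Jordan_Normal_Form.Matrix_Kernel"
begin

definition simple_graph_on :: "nat \<Rightarrow> nat set set \<Rightarrow> bool" where
  "simple_graph_on n E \<longleftrightarrow> (\<forall>e\<in>E. \<exists>i j. i < n \<and> j < n \<and> i \<noteq> j \<and> e = {i, j})"

definition is_cycle :: "nat set set \<Rightarrow> nat list \<Rightarrow> bool" where
  "is_cycle E xs \<longleftrightarrow> length xs \<ge> 3 \<and> distinct xs \<and>
     (\<forall>k. Suc k < length xs \<longrightarrow> {xs ! k, xs ! Suc k} \<in> E) \<and> {last xs, hd xs} \<in> E"

definition forest :: "nat \<Rightarrow> nat set set \<Rightarrow> bool" where
  "forest n E \<longleftrightarrow> simple_graph_on n E \<and> (\<nexists>xs. is_cycle E xs)"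

definition in_R :: "nat \<Rightarrow> nat set set \<Rightarrow> real mat \<Rightarrow> bool" where
  "in_R n E A \<longleftrightarrow> A \<in> carrier_mat n n \<and>
     (\<forall>i<n. \<forall>j<n. i \<noteq> j \<longrightarrow>
        (A $$ (i, j) \<noteq> 0 \<longleftrightarrow> {i, j} \<in> E) \<and>
        ({i, j} \<in> E \<longrightarrow> A $$ (i, j) * A $$ (j, i) > 0))"

text \<open>A subtree of T, given by its vertex set S: a nonempty set of vertices
  inducing a connected subgraph of T (in a forest such a subgraph is a tree,
  and every subtree is induced by its vertex set).\<close>

definition is_subtree :: "nat \<Rightarrow> nat set set \<Rightarrow> nat set \<Rightarrow> bool" where
  "is_subtree n E S \<longleftrightarrow> S \<noteq> {} \<and> S \<subseteq> {0..<n} \<and>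
     (\<forall>u\<in>S. \<forall>v\<in>S. (\<lambda>x y. x \<in> S \<and> y \<in> S \<and> {x, y} \<in> E)\<^sup>*\<^sup>* u v)"

definition independent_subtrees :: "nat set set \<Rightarrow> nat set \<Rightarrow> nat set \<Rightarrow> bool" where
  "independent_subtrees E S1 S2 \<longleftrightarrow> (\<forall>u\<in>S1. \<forall>v\<in>S2. {u, v} \<notin> E)"

definition induced_path :: "nat set set \<Rightarrow> nat list \<Rightarrow> bool" where
  "induced_path E xs \<longleftrightarrow> xs \<noteq> [] \<and> distinct xs \<and>
     (\<forall>i<length xs. \<forall>j<length xs. {xs ! i, xs ! j} \<in> E \<longleftrightarrow> (i + 1 = j \<or> j + 1 = i))"

definition path_cover :: "nat set set \<Rightarrow> nat set \<Rightarrow> nat list set \<Rightarrow> bool" where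
  "path_cover E W C \<longleftrightarrow> finite C \<and> (\<forall>p\<in>C. induced_path E p \<and> set p \<subseteq> W) \<and>
     (\<forall>p\<in>C. \<forall>q\<in>C. p \<noteq> q \<longrightarrow> set p \<inter> set q = {}) \<and>
     (\<Union>p\<in>C. set p) = W"

definition path_cover_number :: "nat set set \<Rightarrow> nat set \<Rightarrow> nat" where
  "path_cover_number E W = (LEAST k. \<exists>C. path_cover E W C \<and> card C = k)"

end

theory Submission
  imports Defs
begin


definition pathok :: "nat set set \<Rightarrow> nat list \<Rightarrow> bool" where
  "pathok E p \<longleftrightarrow> p \<noteq> [] \<and> distinct p \<and> (\<forall>k. Suc k < length p \<longrightarrow> {p ! k, p ! Suc k} \<in> E)"

lemma leaf_exists:
  assumes fin: "finite V" and ne: "V \<noteq> {}" and noc: "\<nexists>xs. is_cycle E xs"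
  shows "\<exists>v\<in>V. \<forall>w\<in>V. \<forall>w'\<in>V. w \<noteq> v \<and> {v,w} \<in> E \<and> w' \<noteq> v \<and> {v,w'} \<in> E \<longrightarrow> w = w'"
proof -
  let ?P = "\<lambda>xs. pathok E xs \<and> set xs \<subseteq> V"
  obtain v0 where v0: "v0 \<in> V" using ne by auto
  have P0: "?P [v0]" using v0 by (auto simp: pathok_def)
  have bnd: "\<forall>xs. ?P xs \<longrightarrow> length xs < Suc (card V)"
    by (metis card_mono distinct_card fin less_Suc_eq_le pathok_def)
  obtain xs where xs: "?P xs" and mx: "\<forall>ys. ?P ys \<longrightarrow> length ys \<le> length xs"
    using ex_has_greatest_nat[of ?P "[v0]" length "Suc (card V)"] P0 bnd by blast
  have xsne: "xs \<noteq> []" and dxs: "distinct xs" and exs: "\<forall>k. Suc k < length xs \<longrightarrow> {xs ! k, xs ! Suc k} \<in> E"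
    using xs by (auto simp: pathok_def)
  define v where "v = last xs"
  have vV: "v \<in> V" using xs xsne v_def by auto
  have key: "w = xs ! (length xs - 2) \<and> length xs \<ge> 2" if w: "w \<in> V" "w \<noteq> v" "{v,w} \<in> E" for w
  proof (cases "w \<in> set xs")
    case False
    have "?P (xs @ [w])"
      using xs w False unfolding pathok_def
      apply (auto simp: nth_append v_def)
      by (metis Suc_lessI diff_Suc_1 insert_commute last_conv_nth xsne)
    with mx show ?thesis by fastforce
  next
    case True
    then obtain k where k: "k < length xs" "xs ! k = w" by (auto simp: in_set_conv_nth)
    have vl: "v = xs ! (length xs - 1)" using v_def last_conv_nth xsne by auto
    have kne: "k \<noteq> length xs - 1" using k w vl by auto
    show ?thesis
    proof (rule ccontr)
      assume nk: "\<not> ?thesis"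
      have k3: "k + 3 \<le> length xs" 
      proof -
        have "k \<noteq> length xs - 2" using nk k kne by auto
        then show ?thesis using k kne by linarith
      qed
      have "is_cycle E (drop k xs)"
        unfolding is_cycle_def
      proof (intro conjI allI impI)
        show "3 \<le> length (drop k xs)" using k3 by simp
        show "distinct (drop k xs)" using dxs by simp
        fix i assume "Suc i < length (drop k xs)"
        then show "{drop k xs ! i, drop k xs ! Suc i} \<in> E" using exs by auto
      next
        have "last (drop k xs) = v" using k v_def by (simp add: last_drop)
        moreover have "hd (drop k xs) = w" using k by (simp add: hd_drop_conv_nth)
        ultimately show "{last (drop k xs), hd (drop k xs)} \<in> E" using w by simp
      qed
      with noc show False by blast
    qed
  qed
  show ?thesis using vV key by metis
qed


definition kerV :: "(nat \<Rightarrow> nat \<Rightarrow> real) \<Rightarrow> nat set \<Rightarrow> (nat \<Rightarrow> real) \<Rightarrow> bool" where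
  "kerV a V x \<longleftrightarrow> (\<forall>i\<in>V. (\<Sum>j\<in>V. a i j * x j) = 0)"

definition injU :: "(nat \<Rightarrow> nat \<Rightarrow> real) \<Rightarrow> nat set \<Rightarrow> bool" where
  "injU a U \<longleftrightarrow> (\<forall>y. kerV a U y \<longrightarrow> (\<forall>j\<in>U. y j = 0))"

definition schur :: "(nat \<Rightarrow> nat \<Rightarrow> real) \<Rightarrow> nat \<Rightarrow> nat \<Rightarrow> nat \<Rightarrow> real" where
  "schur a v i j = a i j - a i v * a v j / a v v"

lemma schur_ker:
  assumes "finite V" "v \<in> V" "a v v \<noteq> 0" "kerV a V x"
  shows "kerV (schur a v) (V - {v}) x"
  unfolding kerV_def
proof
  fix i assume i: "i \<in> V - {v}"
  have s1: "(\<Sum>j\<in>V - {v}. a i j * x j) = - (a i v * x v)"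
    using assms i sum.remove[of V v "\<lambda>j. a i j * x j"] unfolding kerV_def by auto
  have s2: "(\<Sum>j\<in>V - {v}. a v j * x j) = - (a v v * x v)"
    using assms sum.remove[of V v "\<lambda>j. a v j * x j"] unfolding kerV_def by auto
  have "(\<Sum>j\<in>V - {v}. schur a v i j * x j)
      = (\<Sum>j\<in>V - {v}. a i j * x j) - (a i v / a v v) * (\<Sum>j\<in>V - {v}. a v j * x j)"
    unfolding schur_def by (simp add: algebra_simps sum_subtractf sum_distrib_left)
  also have "\<dots> = 0" using s1 s2 assms(3) by (simp add: field_simps)
  finally show "(\<Sum>j\<in>V - {v}. schur a v i j * x j) = 0" .
qed

lemma schur_inj:
  assumes "finite U" "v \<in> U" "a v v \<noteq> 0" "injU a U"
  shows "injU (schur a v) (U - {v})"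
  unfolding injU_def
proof (intro allI impI)
  fix y assume ky: "kerV (schur a v) (U - {v}) y"
  define t where "t = - (\<Sum>j\<in>U - {v}. a v j * y j) / a v v"
  define y' where "y' = y(v := t)"
  have eq: "(\<Sum>j\<in>U - {v}. a i j * y' j) = (\<Sum>j\<in>U - {v}. a i j * y j)" for i
    unfolding y'_def by (rule sum.cong) auto
  have "kerV a U y'"
    unfolding kerV_def
  proof
    fix i assume i: "i \<in> U"
    have split: "(\<Sum>j\<in>U. a i j * y' j) = a i v * t + (\<Sum>j\<in>U - {v}. a i j * y j)"
      using sum.remove[of U v "\<lambda>j. a i j * y' j"] assms eq by (simp add: y'_def)
    show "(\<Sum>j\<in>U. a i j * y' j) = 0"
    proof (cases "i = v")
      case True
      then show ?thesis using split assms(3) by (simp add: t_def field_simps)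
    next
      case False
      then have "(\<Sum>j\<in>U - {v}. schur a v i j * y j) = 0" using ky i unfolding kerV_def by auto
      moreover have "(\<Sum>j\<in>U - {v}. schur a v i j * y j)
        = (\<Sum>j\<in>U - {v}. a i j * y j) - (a i v / a v v) * (\<Sum>j\<in>U - {v}. a v j * y j)"
        unfolding schur_def by (simp add: algebra_simps sum_subtractf sum_distrib_left)
      ultimately show ?thesis using split assms(3) by (simp add: t_def field_simps)
    qed
  qed
  then have "\<forall>j\<in>U. y' j = 0" using assms(4) unfolding injU_def by blast
  then show "\<forall>j\<in>U - {v}. y j = 0" unfolding y'_def by (metis DiffE fun_upd_other singletonI)
qed

lemma schur_inj_out:
  assumes "\<forall>i\<in>U. a i v = 0" "injU a U"
  shows "injU (schur a v) U"
proof -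
  have "kerV (schur a v) U y = kerV a U y" for y
    unfolding kerV_def schur_def using assms(1) by (intro ball_cong refl sum.cong) auto
  then show ?thesis using assms(2) unfolding injU_def by simp
qed

lemma ker_remove:
  assumes "finite V" "R \<subseteq> V" "kerV a V x" "\<forall>i\<in>V - R. \<forall>j\<in>R. a i j * x j = 0"
  shows "kerV a (V - R) x"
  unfolding kerV_def
proof
  fix i assume i: "i \<in> V - R"
  have "(\<Sum>j\<in>V. a i j * x j) = (\<Sum>j\<in>V - R. a i j * x j) + (\<Sum>j\<in>R. a i j * x j)"
    using sum.subset_diff[of R V "\<lambda>j. a i j * x j"] assms(1,2) by simp
  moreover have "(\<Sum>j\<in>R. a i j * x j) = 0" using assms(4) i by simp
  ultimately show "(\<Sum>j\<in>V - R. a i j * x j) = 0" using assms(3) i unfolding kerV_def by simp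
qed

lemma recover:
  assumes "finite V" "kerV a V x" "i \<in> V" "u \<in> V" "a i u \<noteq> 0" "\<forall>j\<in>V - {u}. a i j * x j = 0"
  shows "x u = 0"
proof -
  have "(\<Sum>j\<in>V. a i j * x j) = a i u * x u + (\<Sum>j\<in>V - {u}. a i j * x j)"
    using assms(1,4) by (rule sum.remove)
  then have "a i u * x u = 0" using assms unfolding kerV_def by simp
  then show ?thesis using assms(5) by simp
qed

lemma inj_pair:
  assumes "finite U" "u \<in> U" "v \<in> U" "u \<noteq> v" "a u v \<noteq> 0" "\<forall>i\<in>U - {u}. a i v = 0" "injU a U" "\<forall>j\<in>U - {u, v}. a v j = 0"
  shows "injU a (U - {u, v})"
  unfolding injU_def
proof (intro allI impI)
  fix y assume ky: "kerV a (U - {u, v}) y"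
  define t where "t = - (\<Sum>j\<in>U - {u, v}. a u j * y j) / a u v"
  define y' where "y' = y(u := 0, v := t)"
  have eq: "(\<Sum>j\<in>U - {u, v}. a i j * y' j) = (\<Sum>j\<in>U - {u, v}. a i j * y j)" for i
    unfolding y'_def by (rule sum.cong) auto
  have sp: "(\<Sum>j\<in>U. a i j * y' j) = a i v * t + (\<Sum>j\<in>U - {u, v}. a i j * y j)" for i
  proof -
    have "(\<Sum>j\<in>U. a i j * y' j) = (\<Sum>j\<in>{u, v}. a i j * y' j) + (\<Sum>j\<in>U - {u, v}. a i j * y' j)"
      using sum.subset_diff[of "{u, v}" U "\<lambda>j. a i j * y' j"] assms(1-3) by simp
    then show ?thesis using eq assms(4) by (simp add: y'_def)
  qed
  have "kerV a U y'"
    unfolding kerV_def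
  proof
    fix i assume i: "i \<in> U"
    show "(\<Sum>j\<in>U. a i j * y' j) = 0"
    proof (cases "i = u")
      case True
      have "a u v * t = - (\<Sum>j\<in>U - {u, v}. a u j * y j)" unfolding t_def using assms(5) by simp
      then show ?thesis using sp[of u] True by simp
    next
      case False
      then have aiv: "a i v = 0" using assms(6) i by auto
      show ?thesis
      proof (cases "i = v")
        case True
        have "(\<Sum>j\<in>U - {u, v}. a i j * y j) = 0"
        proof -
          have "(\<Sum>j\<in>U - {u, v}. a i j * y j) = (\<Sum>j\<in>U - {u, v}. 0)"
          proof (rule sum.cong)
            fix j assume j: "j \<in> U - {u, v}"
            show "a i j * y j = 0" using assms(8) j True by simp
          qed simp
          then show ?thesis by simp
        qed
        then show ?thesis using sp aiv by simp
      next
        case False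
        then have "(\<Sum>j\<in>U - {u, v}. a i j * y j) = 0" using ky i \<open>i \<noteq> u\<close> unfolding kerV_def by auto
        then show ?thesis using sp aiv by simp
      qed
    qed
  qed
  then have "\<forall>j\<in>U. y' j = 0" using assms(7) unfolding injU_def by blast
  then show "\<forall>j\<in>U - {u, v}. y j = 0" unfolding y'_def by (metis DiffE insertCI fun_upd_other)
qed



definition patt :: "nat set set \<Rightarrow> (nat \<Rightarrow> nat \<Rightarrow> real) \<Rightarrow> nat set \<Rightarrow> bool" where
  "patt E a V \<longleftrightarrow> (\<forall>i\<in>V. \<forall>j\<in>V. i \<noteq> j \<longrightarrow> (a i j \<noteq> 0 \<longleftrightarrow> {i, j} \<in> E))"

definition cover :: "nat set set \<Rightarrow> nat set \<Rightarrow> nat set \<Rightarrow> nat list set \<Rightarrow> bool" where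
  "cover E V U C \<longleftrightarrow> (\<forall>p\<in>C. pathok E p \<and> set p \<subseteq> V - U) \<and>
     (\<forall>p\<in>C. \<forall>q\<in>C. p \<noteq> q \<longrightarrow> set p \<inter> set q = {}) \<and> V - U \<subseteq> (\<Union>p\<in>C. set p)"

lemma cover_U: "cover E V U C \<Longrightarrow> R \<subseteq> U \<Longrightarrow> cover E (V - R) (U - R) C"
  unfolding cover_def by blast

lemma cover_replace:
  assumes "cover E V U C" "p \<in> C" "R \<subseteq> set p" "q = [] \<or> pathok E q" "set q = set p - R"
  shows "cover E (V - R) U ((C - {p}) \<union> (if q = [] then {} else {q}))"
proof -
  have c1: "\<forall>p\<in>C. pathok E p \<and> set p \<subseteq> V - U" and c2: "\<forall>p\<in>C. \<forall>q\<in>C. p \<noteq> q \<longrightarrow> set p \<inter> set q = {}"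
    and c3: "V - U \<subseteq> (\<Union>p\<in>C. set p)" using assms(1) unfolding cover_def by auto
  have o: "set p' \<inter> set p = {}" if "p' \<in> C" "p' \<noteq> p" for p' using c2 that assms(2) by blast
  show ?thesis unfolding cover_def
  proof (intro conjI)
    show "\<forall>pa\<in>C - {p} \<union> (if q = [] then {} else {q}). pathok E pa \<and> set pa \<subseteq> V - R - U"
      using c1 o assms(2-5) by (auto split: if_splits; blast)
    show "\<forall>pa\<in>C - {p} \<union> (if q = [] then {} else {q}). \<forall>qa\<in>C - {p} \<union> (if q = [] then {} else {q}).
        pa \<noteq> qa \<longrightarrow> set pa \<inter> set qa = {}"
      using c2 o assms(5) by (auto split: if_splits; blast)
    show "V - R - U \<subseteq> (\<Union>pa\<in>C - {p} \<union> (if q = [] then {} else {q}). set pa)"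
    proof
      fix w assume w: "w \<in> V - R - U"
      then obtain p' where p': "p' \<in> C" "w \<in> set p'" using c3 by blast
      show "w \<in> (\<Union>pa\<in>C - {p} \<union> (if q = [] then {} else {q}). set pa)"
      proof (cases "p' = p")
        case True
        then have "w \<in> set q" using w p' assms(5) by auto
        then show ?thesis by auto
      next
        case False then show ?thesis using p' by auto
      qed
    qed
  qed
qed

lemma pathok_tl: "pathok E p \<Longrightarrow> tl p \<noteq> [] \<Longrightarrow> pathok E (tl p)"
  unfolding pathok_def by (auto simp: nth_tl distinct_tl)

lemma pathok_butlast: "pathok E p \<Longrightarrow> butlast p \<noteq> [] \<Longrightarrow> pathok E (butlast p)"
  unfolding pathok_def by (auto simp: nth_butlast distinct_butlast)

lemma set_tl_distinct: "distinct p \<Longrightarrow> p \<noteq> [] \<Longrightarrow> set (tl p) = set p - {hd p}"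
  by (cases p) auto

lemma set_butlast_distinct: "distinct p \<Longrightarrow> p \<noteq> [] \<Longrightarrow> set (butlast p) = set p - {last p}"
proof -
  assume d: "distinct p" and ne: "p \<noteq> []"
  have e: "p = butlast p @ [last p]" using ne by simp
  have "distinct (butlast p @ [last p])" using d e by metis
  then show ?thesis by (subst (2) e) auto
qed

lemma hd_butlast': "butlast xs \<noteq> [] \<Longrightarrow> hd (butlast xs) = hd xs"
  by (cases xs) auto

lemma patt_mono: "patt E a V \<Longrightarrow> W \<subseteq> V \<Longrightarrow> patt E a W"
  unfolding patt_def by blast



lemma schur_patt:
  assumes "patt E a V" "v \<in> V"
    and leaf: "\<forall>w\<in>V. \<forall>w'\<in>V. w \<noteq> v \<and> {v,w} \<in> E \<and> w' \<noteq> v \<and> {v,w'} \<in> E \<longrightarrow> w = w'"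
  shows "patt E (schur a v) (V - {v})"
  unfolding patt_def
proof (intro ballI impI)
  fix i j assume i: "i \<in> V - {v}" and j: "j \<in> V - {v}" and ij: "i \<noteq> j"
  have "a i v * a v j = 0"
  proof (rule ccontr)
    assume "a i v * a v j \<noteq> 0"
    then have "a i v \<noteq> 0" "a v j \<noteq> 0" by auto
    then have "{i, v} \<in> E" "{v, j} \<in> E" using assms(1,2) i j unfolding patt_def by auto
    then have "{v, i} \<in> E" by (simp add: insert_commute)
    then show False using leaf i j ij \<open>{v, j} \<in> E\<close> by blast
  qed
  then have "schur a v i j = a i j" unfolding schur_def by simp
  then show "(schur a v i j \<noteq> 0) = ({i, j} \<in> E)" using assms(1) i j ij unfolding patt_def by auto
qed

lemma key:
  assumes "finite V" "\<nexists>xs. is_cycle E xs" "patt E a V" "U \<subseteq> V" "injU a U" "cover E V U C"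
    "kerV a V x" "\<forall>p\<in>C. x (hd p) = 0"
  shows "\<forall>j\<in>V. x j = 0"
  using assms
proof (induction "card V" arbitrary: V a U C x rule: less_induct)
  case less
  note IH = less.hyps
  show ?case
  proof (cases "V = {}")
    case True thus ?thesis by simp
  next
    case False
    obtain v where vV: "v \<in> V" and
      leaf: "\<forall>w\<in>V. \<forall>w'\<in>V. w \<noteq> v \<and> {v,w} \<in> E \<and> w' \<noteq> v \<and> {v,w'} \<in> E \<longrightarrow> w = w'"
      using leaf_exists[OF less.prems(1) False less.prems(2)] by blast
    have fin: "finite V" using less.prems(1) .
    have avw: "a v w \<noteq> 0 \<longleftrightarrow> {v,w} \<in> E" if "w \<in> V" "w \<noteq> v" for w
      using less.prems(3) vV that unfolding patt_def by auto
    have awv: "a w v \<noteq> 0 \<longleftrightarrow> {v,w} \<in> E" if "w \<in> V" "w \<noteq> v" for w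
      using less.prems(3) vV that unfolding patt_def by (auto simp: insert_commute)
    have uniq: "w = w'" if "w \<in> V" "w \<noteq> v" "{v,w} \<in> E" "w' \<in> V" "w' \<noteq> v" "{v,w'} \<in> E" for w w'
      using leaf that by blast
    have cardv: "card (V - {v}) < card V" using fin vV by (meson card_Diff1_less)
    have cardp: "card (V - {u, v}) < card V" if "u \<in> V" for u
      
    proof -
      have "card (V - {u, v}) \<le> card (V - {v})" using fin by (intro card_mono) auto
      then show ?thesis using cardv by linarith
    qed
    have c1: "\<forall>p\<in>C. pathok E p \<and> set p \<subseteq> V - U" and c3: "V - U \<subseteq> (\<Union>p\<in>C. set p)"
      using less.prems(6) unfolding cover_def by auto
    show ?thesis
    proof (cases "v \<in> U")
      case vU: True
      show ?thesis
      proof (cases "a v v = 0")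
        case False
        have "\<forall>j\<in>V - {v}. x j = 0"
        proof (rule IH[OF cardv])
          show "finite (V - {v})" using fin by simp
          show "\<nexists>xs. is_cycle E xs" using less.prems(2) .
          show "patt E (schur a v) (V - {v})" using schur_patt[OF less.prems(3) vV leaf] .
          show "U - {v} \<subseteq> V - {v}" using less.prems(4) by auto
          show "injU (schur a v) (U - {v})"
            using schur_inj[OF _ vU False less.prems(5)] less.prems(4) fin finite_subset by blast
          show "cover E (V - {v}) (U - {v}) C" using cover_U[OF less.prems(6)] vU by simp
          show "kerV (schur a v) (V - {v}) x" using schur_ker[OF fin vV False less.prems(7)] .
          show "\<forall>p\<in>C. x (hd p) = 0" using less.prems(8) .
        qed
        moreover have "x v = 0"
          using recover[OF fin less.prems(7) vV vV False] calculation by simp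
        ultimately show ?thesis by blast
      next
        case avv: True
        have finU: "finite U" using less.prems(4) fin finite_subset by blast
        obtain u where uU: "u \<in> U" and auv: "a u v \<noteq> 0"
        proof -
          have "\<exists>u\<in>U. a u v \<noteq> 0"
          proof (rule ccontr)
            assume nz: "\<not> (\<exists>u\<in>U. a u v \<noteq> 0)"
            define y where "y = (\<lambda>j. if j = v then (1::real) else 0)"
            have "kerV a U y" unfolding kerV_def
            proof
              fix i assume "i \<in> U"
              have "(\<Sum>j\<in>U. a i j * y j) = (\<Sum>j\<in>U. if j = v then a i v else 0)"
                unfolding y_def by (rule sum.cong) auto
              also have "\<dots> = a i v" using finU vU by simp
              finally show "(\<Sum>j\<in>U. a i j * y j) = 0" using nz \<open>i \<in> U\<close> by auto
            qed
            then have "y v = 0" using less.prems(5) vU unfolding injU_def by blast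
            then show False unfolding y_def by simp
          qed
          then show ?thesis using that by blast
        qed
        have uv: "u \<noteq> v" using auv avv by auto
        have uV: "u \<in> V" using uU less.prems(4) by auto
        have euv: "{v, u} \<in> E" using awv[OF uV uv] auv by simp
        have avj: "a v j = 0" if "j \<in> V" "j \<noteq> u" for j
        proof (cases "j = v")
          case True then show ?thesis using avv by simp
        next
          case False
          show ?thesis using avw[OF that(1) False] uniq[OF uV uv euv that(1) False] that(2) by auto
        qed
        have ajv: "a j v = 0" if "j \<in> V" "j \<noteq> u" for j
        proof (cases "j = v")
          case True then show ?thesis using avv by simp
        next
          case False
          show ?thesis using awv[OF that(1) False] uniq[OF uV uv euv that(1) False] that(2) by auto
        qed
        have xu: "x u = 0"
          using recover[OF fin less.prems(7) vV uV] avw[OF uV uv] euv avj by auto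
        have "\<forall>j\<in>V - {u, v}. x j = 0"
        proof (rule IH[OF cardp[OF uV]])
          show "finite (V - {u, v})" using fin by simp
          show "\<nexists>xs. is_cycle E xs" using less.prems(2) .
          show "patt E a (V - {u, v})" using patt_mono[OF less.prems(3)] by auto
          show "U - {u, v} \<subseteq> V - {u, v}" using less.prems(4) by auto
          show "injU a (U - {u, v})"
            using inj_pair[OF finU uU vU uv auv _ less.prems(5)] ajv avj less.prems(4) by auto
          show "cover E (V - {u, v}) (U - {u, v}) C" using cover_U[OF less.prems(6)] vU uU by simp
          show "kerV a (V - {u, v}) x"
            using ker_remove[OF fin _ less.prems(7)] uV vV xu ajv by auto
          show "\<forall>p\<in>C. x (hd p) = 0" using less.prems(8) .
        qed
        moreover have "x v = 0"
          using recover[OF fin less.prems(7) uV vV auv] calculation xu by auto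
        ultimately show ?thesis using xu by blast
      qed
    next
      case vU: False
      then obtain p where pC: "p \<in> C" and vp: "v \<in> set p" using c3 vV by blast
      have pok: "pathok E p" and pV: "set p \<subseteq> V - U" using c1 pC by auto
      have pne: "p \<noteq> []" and pd: "distinct p" and pe: "\<And>k. Suc k < length p \<Longrightarrow> {p ! k, p ! Suc k} \<in> E"
        using pok unfolding pathok_def by auto
      show ?thesis
      proof (cases "v = hd p")
        case vh: True
        have xv: "x v = 0" using less.prems(8) pC vh by simp
        define q where "q = tl p"
        have hdq: "x (hd q) = 0" if qne: "q \<noteq> []"
        proof -
          have l2: "Suc 0 < length p" using qne pne unfolding q_def by (cases p) auto
          have hq: "hd q = p ! 1" using qne pne unfolding q_def by (cases p) (auto simp: hd_conv_nth)
          have h0: "p ! 0 = v" using vh pne by (simp add: hd_conv_nth)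
          have ne: "p ! 1 \<noteq> v" using nth_eq_iff_index_eq[OF pd l2, of 0] l2 h0 pne by simp
          have w: "p ! 1 \<in> V" using pV nth_mem[OF l2] by auto
          have e: "{v, p ! 1} \<in> E" using pe[of 0] l2 h0 by simp
          have "\<forall>j\<in>V - {p ! 1}. a v j * x j = 0"
          proof
            fix j assume j: "j \<in> V - {p ! 1}"
            show "a v j * x j = 0"
            proof (cases "j = v")
              case True then show ?thesis using xv by simp
            next
              case False then show ?thesis using avw[of j] uniq[OF w ne e, of j] j by auto
            qed
          qed
          then show ?thesis using recover[OF fin less.prems(7) vV w] avw[OF w ne] e hq by auto
        qed
        have "\<forall>j\<in>V - {v}. x j = 0"
        proof (rule IH[OF cardv])
          show "finite (V - {v})" using fin by simp
          show "\<nexists>xs. is_cycle E xs" using less.prems(2) .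
          show "patt E a (V - {v})" using patt_mono[OF less.prems(3)] by auto
          show "U \<subseteq> V - {v}" using less.prems(4) vU by auto
          show "injU a U" using less.prems(5) .
          have sq: "set q = set p - {v}" unfolding q_def using set_tl_distinct[OF pd pne] vh by simp
          show "cover E (V - {v}) U ((C - {p}) \<union> (if q = [] then {} else {q}))"
            using cover_replace[OF less.prems(6) pC _ _ sq] vp pathok_tl[OF pok] q_def by auto
          show "kerV a (V - {v}) x" using ker_remove[OF fin _ less.prems(7)] vV xv by auto
          show "\<forall>p'\<in>(C - {p}) \<union> (if q = [] then {} else {q}). x (hd p') = 0"
            using less.prems(8) hdq by auto
        qed
        then show ?thesis using xv by blast
      next
        case vnh: False
        obtain k where k: "k < length p" "p ! k = v" using vp by (auto simp: in_set_conv_nth)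
        have k0: "k \<noteq> 0"
        proof
          assume "k = 0" then show False using k vnh pne by (simp add: hd_conv_nth)
        qed
        have klast: "k = length p - 1"
        proof (rule ccontr)
          assume "k \<noteq> length p - 1"
          then have kk: "Suc k < length p" using k by auto
          have e1: "{p ! (k - 1), v} \<in> E" using pe[of "k - 1"] k k0 by simp
          have e2: "{v, p ! Suc k} \<in> E" using pe[of k] kk k by simp
          have n1: "p ! (k - 1) \<noteq> v" using nth_eq_iff_index_eq[OF pd _ k(1), of "k - 1"] k k0 by simp
          have n2: "p ! Suc k \<noteq> v" using nth_eq_iff_index_eq[OF pd kk k(1)] k by simp
          have n12: "p ! (k - 1) \<noteq> p ! Suc k" using nth_eq_iff_index_eq[OF pd _ kk, of "k - 1"] k kk k0 by simp
          have kl: "k - 1 < length p" using k by simp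
          have w1: "p ! (k - 1) \<in> V" using pV nth_mem[OF kl] by auto
          have w2: "p ! Suc k \<in> V" using pV nth_mem[OF kk] by auto
          show False using uniq[OF w1 n1 _ w2 n2 e2] e1 n12 by (simp add: insert_commute)
        qed
        define m where "m = length p"
        have m2: "m \<ge> 2" using k0 k m_def by auto
        define u where "u = p ! (m - 2)"
        have vl: "v = p ! (m - 1)" using k klast m_def by simp
        have vlast: "v = last p" using vl pne m_def by (simp add: last_conv_nth)
        have euv: "{v, u} \<in> E" using pe[of "m - 2"] m2 vl u_def m_def
          by (simp add: insert_commute Suc_diff_Suc numeral_2_eq_2)
        have uv: "u \<noteq> v" using nth_eq_iff_index_eq[OF pd, of "m - 2" "m - 1"] m2 vl u_def m_def by simp
        have ml: "m - 2 < length p" using m2 m_def by simp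
        have up: "u \<in> set p" using u_def nth_mem[OF ml] by auto
        have uV: "u \<in> V" and uU: "u \<notin> U" using up pV by auto
        have avj: "a v j = 0" if "j \<in> V" "j \<noteq> u" "j \<noteq> v" for j
          using avw[OF that(1) that(3)] uniq[OF uV uv euv that(1) that(3)] that(2) by auto
        have ajv: "a j v = 0" if "j \<in> V" "j \<noteq> u" "j \<noteq> v" for j
          using awv[OF that(1) that(3)] uniq[OF uV uv euv that(1) that(3)] that(2) by auto
        have bne: "butlast p \<noteq> []" using m2 m_def by (cases p) auto
        have hdb: "hd (butlast p) = hd p" using bne by (cases p) auto
        show ?thesis
        proof (cases "a v v = 0")
          case False
          define q where "q = butlast p"
          have "\<forall>j\<in>V - {v}. x j = 0"
          proof (rule IH[OF cardv])
            show "finite (V - {v})" using fin by simp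
            show "\<nexists>xs. is_cycle E xs" using less.prems(2) .
            show "patt E (schur a v) (V - {v})" using schur_patt[OF less.prems(3) vV leaf] .
            show "U \<subseteq> V - {v}" using less.prems(4) vU by auto
            show "injU (schur a v) U"
              using schur_inj_out[OF _ less.prems(5)] ajv less.prems(4) vU uU by blast
            have sq: "set q = set p - {v}" unfolding q_def using set_butlast_distinct[OF pd pne] vlast by simp
            show "cover E (V - {v}) U ((C - {p}) \<union> (if q = [] then {} else {q}))"
              using cover_replace[OF less.prems(6) pC _ _ sq] vp pathok_butlast[OF pok] q_def by auto
            show "kerV (schur a v) (V - {v}) x" using schur_ker[OF fin vV False less.prems(7)] .
            show "\<forall>p'\<in>(C - {p}) \<union> (if q = [] then {} else {q}). x (hd p') = 0"
              using less.prems(8) pC hdb q_def by auto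
          qed
          moreover have "x v = 0"
            using recover[OF fin less.prems(7) vV vV False] calculation by simp
          ultimately show ?thesis by blast
        next
          case avv: True
          have xu: "x u = 0"
            using recover[OF fin less.prems(7) vV uV] avw[OF uV uv] euv avj avv by auto
          define q where "q = butlast (butlast p)"
          have lb: "last (butlast p) = u"
            using bne m2 unfolding u_def m_def
            by (simp add: last_conv_nth nth_butlast numeral_2_eq_2)
          have sq: "set q = set p - {u, v}"
            unfolding q_def using set_butlast_distinct[OF distinct_butlast[OF pd] bne]
              set_butlast_distinct[OF pd pne] vlast lb by auto
          have "\<forall>j\<in>V - {u, v}. x j = 0"
          proof (rule IH[OF cardp[OF uV]])
            show "finite (V - {u, v})" using fin by simp
            show "\<nexists>xs. is_cycle E xs" using less.prems(2) .
            show "patt E a (V - {u, v})" using patt_mono[OF less.prems(3)] by auto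
            show "U \<subseteq> V - {u, v}" using less.prems(4) vU uU by auto
            show "injU a U" using less.prems(5) .
            show "cover E (V - {u, v}) U ((C - {p}) \<union> (if q = [] then {} else {q}))"
              using cover_replace[OF less.prems(6) pC _ _ sq] vp up
                pathok_butlast[OF pathok_butlast[OF pok bne]] q_def by auto
            show "kerV a (V - {u, v}) x"
              using ker_remove[OF fin _ less.prems(7)] uV vV xu ajv by auto
            have "hd q = hd p" if "q \<noteq> []" using that hdb unfolding q_def
              by (metis hd_butlast')
            then show "\<forall>p'\<in>(C - {p}) \<union> (if q = [] then {} else {q}). x (hd p') = 0"
              using less.prems(8) pC by auto
          qed
          moreover have "x v = 0"
            using recover[OF fin less.prems(7) uV vV] awv[OF uV uv] euv calculation xu by auto
          ultimately show ?thesis using xu by blast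
        qed
      qed
    qed
  qed
qed



lemma kdim_le:
  fixes A :: "real mat"
  assumes A: "A \<in> carrier_mat n n" and F: "finite F" and Fn: "F \<subseteq> {0..<n}"
    and inj: "\<forall>x \<in> mat_kernel A. (\<forall>f\<in>F. x $ f = 0) \<longrightarrow> x = 0\<^sub>v n"
  shows "kernel_dim A \<le> card F"
proof -
  interpret K: kernel n n A by (unfold_locales) (rule A)
  define fs where "fs = sorted_list_of_set F"
  define k where "k = length fs"
  have kF: "k = card F" unfolding k_def fs_def by simp
  have setfs: "set fs = F" unfolding fs_def using F by simp
  define T :: "real vec \<Rightarrow> real vec" where "T x = vec k (\<lambda>r. x $ (fs ! r))" for x
  interpret W: vec_space "TYPE(real)" k .
  have fsn: "fs ! r < n" if "r < k" for r using that setfs Fn nth_mem[of r fs] unfolding k_def by auto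
  have kc: "x \<in> carrier_vec n" if "x \<in> mat_kernel A" for x using mat_kernelD(1)[OF A that] .
  have hom: "T \<in> module_hom class_ring K.VK (module_vec TYPE(real) k)"
  proof -
    have add: "T (x + y) = T x + T y" if "x \<in> mat_kernel A" "y \<in> mat_kernel A" for x y
      using kc[OF that(1)] kc[OF that(2)] fsn unfolding T_def by (intro eq_vecI) auto
    have sm: "T (r \<cdot>\<^sub>v x) = r \<cdot>\<^sub>v T x" if "x \<in> mat_kernel A" for x r
      using kc[OF that(1)] fsn unfolding T_def by (intro eq_vecI) auto
    have car: "T x \<in> carrier_vec k" for x unfolding T_def by simp
    show ?thesis unfolding module_hom_def using add sm car by (auto simp: module_vec_def)
  qed
  have vk: "vectorspace class_ring K.VK" by (rule K.Ker.vectorspace_axioms)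
  have mk: "module class_ring K.VK" using vk unfolding vectorspace_def by blast
  have mw: "module class_ring (module_vec TYPE(real) k)" using vec_vs[of k] unfolding vectorspace_def by blast
  interpret L: linear_map class_ring K.VK "module_vec TYPE(real) k" T
    by (rule linear_map.intro[OF vk vec_vs mod_hom.intro[OF mk mw]]) (unfold_locales, rule hom)
  obtain B where fB: "finite B" and bB: "K.basis B" using kernel_basis_exists[OF A] by blast
  have dimB: "kernel_dim A = card B" using K.Ker.dim_basis[OF fB bB] by simp
  have BK: "B \<subseteq> mat_kernel A" using bB unfolding K.Ker.basis_def by auto
  have injT: "inj_on T (mat_kernel A)"
  proof (rule inj_onI)
    fix x y assume x: "x \<in> mat_kernel A" and y: "y \<in> mat_kernel A" and Txy: "T x = T y"
    have xc: "x \<in> carrier_vec n" and yc: "y \<in> carrier_vec n" using kc x y by auto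
    have "x - y \<in> mat_kernel A"
    proof (rule mat_kernelI[OF A])
      show "x - y \<in> carrier_vec n" using xc yc by simp
      have "A *\<^sub>v (x - y) = A *\<^sub>v x - A *\<^sub>v y" using A xc yc by (simp add: mult_minus_distrib_mat_vec)
      also have "\<dots> = 0\<^sub>v n - 0\<^sub>v n" using mat_kernelD(2)[OF A x] mat_kernelD(2)[OF A y] by simp
      finally show "A *\<^sub>v (x - y) = 0\<^sub>v n" by simp
    qed
    moreover have "\<forall>f\<in>F. (x - y) $ f = 0"
    proof
      fix f assume f: "f \<in> F"
      then obtain r where r: "r < k" "fs ! r = f" using setfs unfolding k_def by (metis in_set_conv_nth)
      have "T x $ r = T y $ r" using Txy by simp
      then have "x $ f = y $ f" using r unfolding T_def by simp
      moreover have "f < n" using f Fn by auto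
      ultimately show "(x - y) $ f = 0" using xc yc by simp
    qed
    ultimately have "x - y = 0\<^sub>v n" using inj by blast
    then show "x = y" using xc yc
      by (metis carrier_vecD minus_cancel_vec uminus_carrier_vec uminus_l_inv_vec comm_add_vec vec_eq_iff index_minus_vec(1) index_zero_vec(1) eq_iff_diff_eq_0)
  qed
  have injB: "inj_on T B" using injT BK by (rule inj_on_subset)
  have TBc: "T ` B \<subseteq> carrier_vec k" by (auto simp: T_def)
  have liB: "K.lin_indpt B" using bB unfolding K.Ker.basis_def by auto
  have li: "W.lin_indpt (T ` B)"
  proof (rule W.finite_lin_indpt2, goal_cases)
    case 1 show ?case using fB by simp
  next
    case 2 show ?case using TBc by (simp add: module_vec_def)
  next
    case (3 a)
    have a: "a \<in> T ` B \<rightarrow> carrier class_ring" by (simp add: class_ring_simps)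
    have lc: "W.lincomb a (T ` B) = 0\<^sub>v k" using 3 by simp
    have e1: "W.lincomb a (T ` B) = T (K.lincomb (a \<circ> T) B)"
      using L.lincomb_linear_image[of B a] injT BK a fB by simp
    have lcK: "K.lincomb (a \<circ> T) B \<in> mat_kernel A"
      using K.Ker.lincomb_closed[of B "a \<circ> T"] BK by (simp add: class_ring_simps)
    have T0: "T (0\<^sub>v n) = 0\<^sub>v k" unfolding T_def using fsn by (intro eq_vecI) auto
    have "T (K.lincomb (a \<circ> T) B) = T (0\<^sub>v n)"
      using e1 lc T0 by simp
    moreover have "0\<^sub>v n \<in> mat_kernel A" using mat_kernelI[OF A, of "0\<^sub>v n"] A by simp
    ultimately have lc0: "K.lincomb (a \<circ> T) B = 0\<^sub>v n" using injT lcK by (meson inj_onD)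
    have "(a \<circ> T) \<in> B \<rightarrow> {0}"
      using K.Ker.not_lindepD[OF liB fB _ _ lc0] by (simp add: class_ring_simps)
    then show ?case by (auto simp: class_ring_simps)
  qed
  have "card (T ` B) \<le> W.dim" using W.li_le_dim(2)[OF W.fin_dim _ li] TBc by auto
  then show ?thesis using dimB card_image[OF injB] W.dim_is_n kF by simp
qed


lemma sub_inj:
  fixes A :: "real mat"
  assumes A: "A \<in> carrier_mat n n" and S: "S \<subseteq> {0..<n}" and inv: "invertible_mat (submatrix A S S)"
    and ky: "kerV (\<lambda>i j. A $$ (i, j)) S y"
  shows "\<forall>j\<in>S. y j = 0"
proof -
  have fS: "finite S" using S finite_subset by blast
  define m where "m = card S"
  have cs: "{i. i < n \<and> i \<in> S} = S" using S by auto
  define M where "M = submatrix A S S"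
  have dA: "dim_row A = n" "dim_col A = n" using A by auto
  have dr: "dim_row M = m" "dim_col M = m" unfolding M_def m_def dim_submatrix dA cs by simp_all
  have Mij: "M $$ (r, s) = A $$ (pick S r, pick S s)" if "r < m" "s < m" for r s
    unfolding M_def using submatrix_index[of r A S s S] that dA cs m_def by auto
  have pin: "pick S r \<in> S" if "r < m" for r using pick_in_set that m_def by auto
  have injp: "inj_on (pick S) {..<m}"
  proof (rule inj_onI)
    fix r s assume r: "r \<in> {..<m}" and s: "s \<in> {..<m}" and e: "pick S r = pick S s"
    show "r = s"
    proof (rule ccontr)
      assume "r \<noteq> s"
      then have "r < s \<or> s < r" by auto
      then show False using pick_mono[of r S s] pick_mono[of s S r] r s e m_def by auto
    qed
  qed
  have img: "pick S ` {..<m} = S"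
  proof
    show "pick S ` {..<m} \<subseteq> S" using pin by auto
    show "S \<subseteq> pick S ` {..<m}"
    proof
      fix j assume j: "j \<in> S"
      have "{a \<in> S. a < j} \<subset> S" using j by auto
      then have "card {a \<in> S. a < j} < m" unfolding m_def using fS psubset_card_mono by blast
      then have c: "card {a \<in> S. a < j} \<in> {..<m}" by simp
      have p: "pick S (card {a \<in> S. a < j}) = j" by (rule pick_card_in_set[OF j])
      show "j \<in> pick S ` {..<m}" using image_eqI[of j "pick S" "card {a \<in> S. a < j}" "{..<m}", OF sym[OF p] c] .
    qed
  qed
  define z where "z = vec m (\<lambda>r. y (pick S r))"
  have Mz: "M *\<^sub>v z = 0\<^sub>v m"
  proof (rule eq_vecI)
    show "dim_vec (M *\<^sub>v z) = dim_vec (0\<^sub>v m)" using dr by simp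
    fix r assume "r < dim_vec (0\<^sub>v m)"
    then have r: "r < m" by simp
    have "(M *\<^sub>v z) $ r = (\<Sum>s\<in>{0..<m}. M $$ (r, s) * z $ s)"
      using r dr by (simp add: scalar_prod_def z_def)
    also have "\<dots> = (\<Sum>s\<in>{..<m}. A $$ (pick S r, pick S s) * y (pick S s))"
      using Mij r by (intro sum.cong) (auto simp: z_def)
    also have "\<dots> = (\<Sum>j\<in>S. A $$ (pick S r, j) * y j)"
      using sum.reindex[OF injp, of "\<lambda>j. A $$ (pick S r, j) * y j"] img by simp
    also have "\<dots> = 0" using ky pin[OF r] unfolding kerV_def by blast
    finally show "(M *\<^sub>v z) $ r = 0\<^sub>v m $ r" using r by simp
  qed
  obtain B where MB: "M * B = 1\<^sub>m (dim_row M)" and BM: "B * M = 1\<^sub>m (dim_row B)"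
    using inv unfolding invertible_mat_def inverts_mat_def M_def by blast
  have Bc: "B \<in> carrier_mat m m"
  proof -
    have "dim_col (B * M) = dim_col (1\<^sub>m (dim_row B))" using BM by simp
    then have "dim_row B = m" using dr by simp
    moreover have "dim_col (M * B) = dim_col (1\<^sub>m (dim_row M))" using MB by simp
    then have "dim_col B = m" using dr by simp
    ultimately show ?thesis by auto
  qed
  have Mc: "M \<in> carrier_mat m m" using dr by auto
  have zc: "z \<in> carrier_vec m" unfolding z_def by simp
  have "z = (B * M) *\<^sub>v z" using BM Bc zc by simp
  also have "\<dots> = B *\<^sub>v (M *\<^sub>v z)" using Bc Mc zc by simp
  also have "\<dots> = 0\<^sub>v m" unfolding Mz using Bc by (intro eq_vecI) auto
  finally have z0: "z = 0\<^sub>v m" .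
  show ?thesis
  proof
    fix j assume jS: "j \<in> S"
    have "j \<in> pick S ` {..<m}" using img jS by simp
    then obtain r where r0: "r \<in> {..<m}" "j = pick S r" by (rule imageE)
    then have r: "r < m" "pick S r = j" by auto
    have "z $ r = 0" using z0 r by simp
    then show "y j = 0" using r unfolding z_def by simp
  qed
qed

theorem mainTheorem8:
  fixes n c :: nat and E :: "nat set set" and A :: "real mat" and S :: "nat \<Rightarrow> nat set"
  assumes "forest n E"
    and "in_R n E A"
    and "c \<ge> 1"
    and "\<forall>i<c. is_subtree n E (S i)"
    and "\<forall>i<c. \<forall>j<c. i \<noteq> j \<longrightarrow> independent_subtrees E (S i) (S j)"
    and "\<forall>i<c. invertible_mat (submatrix A (S i) (S i))"
  shows "kernel_dim A \<le> path_cover_number E ({0..<n} - (\<Union>i<c. S i))"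
proof -
  define a where "a = (\<lambda>i j. A $$ (i, j))"
  define V where "V = {0..<n}"
  define U where "U = (\<Union>i<c. S i)"
  define W where "W = V - U"
  have Ac: "A \<in> carrier_mat n n" using assms(2) unfolding in_R_def by auto
  have noc: "\<nexists>xs. is_cycle E xs" using assms(1) unfolding forest_def by auto
  have sg: "simple_graph_on n E" using assms(1) unfolding forest_def by auto
  have noloop: "{w} \<notin> E" for w
  proof
    assume "{w} \<in> E"
    then obtain i j where ij: "i \<noteq> j" "{w} = {i, j}" using sg unfolding simple_graph_on_def by blast
    have "i \<in> {w}" "j \<in> {w}" by (simp_all only: ij(2)) auto
    then show False using ij(1) by simp
  qed
  have pat: "patt E a V" using assms(2) unfolding in_R_def patt_def a_def V_def by auto
  have SV: "S i \<subseteq> V" if "i < c" for i using assms(4) that unfolding is_subtree_def V_def by auto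
  have UV: "U \<subseteq> V" unfolding U_def using SV by auto
  have finV: "finite V" unfolding V_def by simp
  have finU: "finite U" using UV finV finite_subset by blast
  have injU: "injU a U"
    unfolding injU_def
  proof (intro allI impI ballI)
    fix y j assume ky: "kerV a U y" and j: "j \<in> U"
    then obtain i where i: "i < c" "j \<in> S i" unfolding U_def by auto
    have kS: "kerV a (S i) y"
      unfolding kerV_def
    proof
      fix r assume r: "r \<in> S i"
      have SU: "S i \<subseteq> U" unfolding U_def using i by auto
      have z: "(\<Sum>l\<in>U - S i. a r l * y l) = 0"
      proof (rule sum.neutral, rule ballI)
        fix l assume l: "l \<in> U - S i"
        then obtain i' where i': "i' < c" "l \<in> S i'" unfolding U_def by auto
        have ii: "i' \<noteq> i" using l i' by auto
        have "{r, l} \<notin> E" using assms(5) i i' ii r unfolding independent_subtrees_def by blast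
        moreover have "r \<noteq> l" using l r by auto
        moreover have "r \<in> V" "l \<in> V" using r l SU UV by auto
        ultimately have "a r l = 0" using pat unfolding patt_def by blast
        then show "a r l * y l = 0" by simp
      qed
      have "(\<Sum>l\<in>U. a r l * y l) = (\<Sum>l\<in>U - S i. a r l * y l) + (\<Sum>l\<in>S i. a r l * y l)"
        using sum.subset_diff[OF SU finU] by simp
      then show "(\<Sum>l\<in>S i. a r l * y l) = 0" using z ky r SU unfolding kerV_def by auto
    qed
    have "\<forall>j\<in>S i. y j = 0"
      using sub_inj[OF Ac _ _ kS[unfolded a_def]] SV[OF i(1)] assms(6) i(1) unfolding V_def by auto
    then show "y j = 0" using i by auto
  qed
  have ex: "\<exists>C. path_cover E W C \<and> card C = card ((\<lambda>w. [w]) ` W)"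
  proof (intro exI conjI)
    show "card ((\<lambda>w. [w]) ` W) = card ((\<lambda>w. [w]) ` W)" ..
    show "path_cover E W ((\<lambda>w. [w]) ` W)"
      unfolding path_cover_def induced_path_def
      using finV noloop unfolding W_def by auto
  qed
  obtain C where pc: "path_cover E W C" and cC: "card C = path_cover_number E W"
  proof -
    have ex2: "\<exists>k. \<exists>C. path_cover E W C \<and> card C = k" using ex by blast
    have "\<exists>C. path_cover E W C \<and> card C = (LEAST k. \<exists>C. path_cover E W C \<and> card C = k)"
      using LeastI_ex[OF ex2] .
    then show ?thesis using that unfolding path_cover_number_def by blast
  qed
  have finC: "finite C" using pc unfolding path_cover_def by auto
  have cov: "cover E V U C"
    unfolding cover_def
  proof (intro conjI)
    show "\<forall>p\<in>C. pathok E p \<and> set p \<subseteq> V - U"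
    proof
      fix p assume p: "p \<in> C"
      then have ip: "induced_path E p" and sp: "set p \<subseteq> W" using pc unfolding path_cover_def by auto
      have "pathok E p" unfolding pathok_def
      proof (intro conjI allI impI)
        show "p \<noteq> []" "distinct p" using ip unfolding induced_path_def by auto
        fix k assume "Suc k < length p"
        then show "{p ! k, p ! Suc k} \<in> E" using ip unfolding induced_path_def by auto
      qed
      then show "pathok E p \<and> set p \<subseteq> V - U" using sp unfolding W_def by auto
    qed
    show "\<forall>p\<in>C. \<forall>q\<in>C. p \<noteq> q \<longrightarrow> set p \<inter> set q = {}" using pc unfolding path_cover_def by auto
    show "V - U \<subseteq> (\<Union>p\<in>C. set p)" using pc unfolding path_cover_def W_def by auto
  qed
  define F where "F = hd ` C"
  have FV: "F \<subseteq> {0..<n}"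
  proof
    fix f assume "f \<in> F"
    then obtain p where p: "p \<in> C" "f = hd p" unfolding F_def by auto
    have pn: "p \<noteq> []" and ps: "set p \<subseteq> V - U" using cov p unfolding cover_def pathok_def by auto
    have h: "hd p \<in> set p" using pn by simp
    have "hd p \<in> V" using h ps by blast
    then show "f \<in> {0..<n}" using p unfolding V_def by auto
  qed
  have inj: "\<forall>x \<in> mat_kernel A. (\<forall>f\<in>F. x $ f = 0) \<longrightarrow> x = 0\<^sub>v n"
  proof (intro ballI impI)
    fix x assume x: "x \<in> mat_kernel A" and xF: "\<forall>f\<in>F. x $ f = 0"
    have xc: "x \<in> carrier_vec n" and Ax: "A *\<^sub>v x = 0\<^sub>v n" using mat_kernelD[OF Ac x] by auto
    have kx: "kerV a V (\<lambda>j. x $ j)"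
      unfolding kerV_def
    proof
      fix i assume i: "i \<in> V"
      have "(A *\<^sub>v x) $ i = (\<Sum>j\<in>{0..<n}. A $$ (i, j) * x $ j)"
        using Ac xc i unfolding V_def by (simp add: scalar_prod_def)
      then show "(\<Sum>j\<in>V. a i j * x $ j) = 0" using Ax i unfolding a_def V_def by simp
    qed
    have "\<forall>j\<in>V. x $ j = 0"
      using key[OF finV noc pat UV injU cov kx] xF unfolding F_def by auto
    then show "x = 0\<^sub>v n" using xc unfolding V_def by (intro eq_vecI) auto
  qed
  have "kernel_dim A \<le> card F" using kdim_le[OF Ac _ FV inj] finC unfolding F_def by simp
  also have "\<dots> \<le> card C" unfolding F_def using finC by (rule card_image_le)
  finally show ?thesis using cC unfolding W_def V_def U_def by simp
qed


end
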